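(* Let $G=(V=V_0\uplus V_1,v_{\mathsf{init}},E,\gamma)$ be a quantitative graph game and let $d=\frac{p}{q}>1$ be the discount factor, with $p,q$ positive integers. Then the minimal non-zero difference between the costs of simple lassos in $G$ is a rational number with denominator at most $(p^{|V|}-q^{|V|})^2\cdot p^{2|V|}$.
   Context: A quantitative graph game $G=(V=V_0\uplus V_1, v_{\mathsf{init}},E,\gamma)$ consists of a finite directed graph $(V,E)$ in which every state has at least one outgoing edge, a partition of $V$ into $V_0$ and $V_1$, an initial state $v_{\mathsf{init}}$, and an integer cost function $\gamma:E\to\mathbb{Z}$. A lasso is an infinite path of the form $v_0v_1\dots v_n(s_0s_1\dots s_m)^{\omega}$ in $(V,E)$ starting at $v_{\mathsf{init}}$; it is simple if all the states $v_0,\dots,v_n,s_0,\dots,s_m$ are distinct. The cost of a lasso (or any play) $u_0u_1\dots$ with discount factor $d$ is $\sum_{k\ge0}\gamma(u_k,u_{k+1})/d^{k}$. *)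

theory Defs
  imports Complex_Main
begin

text \<open>The integer cost function is a separate parameter
  gamma :: 'v \<Rightarrow> 'v \<Rightarrow> int (only its values on E matter).\<close>
definition quant_game :: "'v set \<Rightarrow> 'v set \<Rightarrow> 'v set \<Rightarrow> 'v \<Rightarrow> ('v \<times> 'v) set \<Rightarrow> bool" where
  "quant_game V V0 V1 vinit E \<longleftrightarrow>
     finite V \<and> V0 \<union> V1 = V \<and> V0 \<inter> V1 = {} \<and> vinit \<in> V \<and> E \<subseteq> V \<times> V \<and>
     (\<forall>v\<in>V. \<exists>w. (v, w) \<in> E)"

definition lasso_play :: "'v list \<Rightarrow> 'v list \<Rightarrow> nat \<Rightarrow> 'v" where
  "lasso_play pre cyc k =
     (if k < length pre then pre ! k else cyc ! ((k - length pre) mod length cyc))"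

text \<open>A lasso v0..vn (s0..sm)^omega in (V,E) starting at vinit (the prefix may be empty);
  it is simple if all listed states are distinct.\<close>
definition lasso :: "'v set \<Rightarrow> ('v \<times> 'v) set \<Rightarrow> 'v \<Rightarrow> 'v list \<Rightarrow> 'v list \<Rightarrow> bool" where
  "lasso V E vinit pre cyc \<longleftrightarrow>
     cyc \<noteq> [] \<and> set (pre @ cyc) \<subseteq> V \<and> hd (pre @ cyc) = vinit \<and>
     (\<forall>k. (lasso_play pre cyc k, lasso_play pre cyc (Suc k)) \<in> E)"

definition simple_lasso :: "'v set \<Rightarrow> ('v \<times> 'v) set \<Rightarrow> 'v \<Rightarrow> 'v list \<Rightarrow> 'v list \<Rightarrow> bool" where
  "simple_lasso V E vinit pre cyc \<longleftrightarrow> lasso V E vinit pre cyc \<and> distinct (pre @ cyc)"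

definition play_cost :: "('v \<Rightarrow> 'v \<Rightarrow> int) \<Rightarrow> real \<Rightarrow> (nat \<Rightarrow> 'v) \<Rightarrow> real" where
  "play_cost gamma d u = (\<Sum>k. real_of_int (gamma (u k) (u (Suc k))) / d ^ k)"

definition lasso_cost :: "('v \<Rightarrow> 'v \<Rightarrow> int) \<Rightarrow> real \<Rightarrow> 'v list \<Rightarrow> 'v list \<Rightarrow> real" where
  "lasso_cost gamma d pre cyc = play_cost gamma d (lasso_play pre cyc)"

end

theory Submission
  imports Defs
begin

lemma pow_div:
  fixes p q :: nat
  assumes "0 < q" "0 < p" "k \<le> K"
  shows "real p ^ K / (real p / real q) ^ k = real q ^ k * real p ^ (K - k)"
proof -
  have "real p ^ K = real p ^ k * real p ^ (K - k)"
    using assms(3) by (metis le_add_diff_inverse power_add)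
  then show ?thesis using assms by (simp add: power_divide field_simps)
qed

lemma cost_form:
  fixes p q :: nat
  assumes q0: "0 < q" and qp: "q < p" and cne: "cyc \<noteq> []"
  shows "\<exists>Y::int. lasso_cost gamma (real p / real q) pre cyc
           = real_of_int Y / (real p ^ length pre * (real p ^ length cyc - real q ^ length cyc))"
proof -
  define d where "d = real p / real q"
  define n where "n = length pre"
  define m where "m = length cyc"
  define u where "u = lasso_play pre cyc"
  define g where "g k = real_of_int (gamma (u k) (u (Suc k)))" for k
  define f where "f k = g k / d ^ k" for k
  have p0: "0 < p" using q0 qp by simp
  have d1: "d > 1" using q0 qp by (simp add: d_def)
  have m0: "m > 0" using cne by (simp add: m_def)
  define A where "A = set (pre @ cyc)"
  have uin: "u k \<in> A" for k
    unfolding u_def lasso_play_def A_def using cne by auto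
  have per: "u (k + n + m) = u (k + n)" for k
    unfolding u_def lasso_play_def n_def m_def by simp
  have perf: "f (k + n + m) = f (k + n) / d ^ m" for k
  proof -
    have "u (Suc k + n + m) = u (Suc k + n)" by (rule per)
    then have "g (k + n + m) = g (k + n)" unfolding g_def using per[of k] by simp
    then show ?thesis unfolding f_def by (simp add: power_add)
  qed
  define M where "M = Max ((\<lambda>(x,y). \<bar>gamma x y\<bar>) ` (A \<times> A))"
  have gM: "\<bar>g k\<bar> \<le> real_of_int M" for k
  proof -
    have "\<bar>gamma (u k) (u (Suc k))\<bar> \<le> M"
      unfolding M_def
    proof (rule Max_ge)
      show "finite ((\<lambda>(x,y). \<bar>gamma x y\<bar>) ` (A \<times> A))" unfolding A_def by simp
      show "\<bar>gamma (u k) (u (Suc k))\<bar> \<in> (\<lambda>(x,y). \<bar>gamma x y\<bar>) ` (A \<times> A)"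
        by (rule image_eqI[where x="(u k, u (Suc k))"]) (use uin in auto)
    qed
    then show ?thesis unfolding g_def by linarith
  qed
  have sf: "summable f"
  proof (rule summable_comparison_test')
    show "summable (\<lambda>k. real_of_int M * (1/d) ^ k)"
      using d1 by (intro summable_mult summable_geometric) simp
    fix k :: nat
    have "norm (f k) = \<bar>g k\<bar> / d ^ k" unfolding f_def using d1 by (simp add: abs_divide)
    also have "\<dots> \<le> real_of_int M / d ^ k" using gM d1 by (simp add: divide_right_mono)
    finally show "norm (f k) \<le> real_of_int M * (1/d) ^ k" by (simp add: power_one_over)
  qed
  define T where "T = (\<Sum>k. f (k + n))"
  define B where "B = (\<Sum>k<m. f (k + n))"
  define P where "P = (\<Sum>k<n. f k)"
  have sT: "summable (\<lambda>k. f (k + n))" using sf by simp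
  have cost: "lasso_cost gamma d pre cyc = T + P"
  proof -
    have "lasso_cost gamma d pre cyc = suminf f"
      unfolding lasso_cost_def play_cost_def f_def g_def u_def by simp
    then show ?thesis unfolding T_def P_def using suminf_split_initial_segment[OF sf, of n] by simp
  qed
  have "T = (\<Sum>k. f (k + m + n)) + B"
    unfolding T_def B_def using suminf_split_initial_segment[OF sT, of m] by simp
  also have "(\<Sum>k. f (k + m + n)) = T / d ^ m"
    unfolding T_def using perf suminf_divide[OF sT, of "d^m"] by (simp add: ac_simps)
  finally have TB: "T = T / d ^ m + B" .
  have dm: "d ^ m > 1" using d1 m0 by simp
  have T1: "T * (d ^ m - 1) = B * d ^ m"
  proof -
    have "T * d ^ m = (T / d ^ m + B) * d ^ m" using TB by simp
    also have "\<dots> = T + B * d ^ m" using dm d1 by (simp add: field_simps)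
    finally have "T * d ^ m = T + B * d ^ m" .
    then show ?thesis by (simp add: algebra_simps)
  qed
  have dq: "d ^ m * real q ^ m = real p ^ m" unfolding d_def using q0 by (simp add: power_divide)
  have T2: "T * (real p ^ m - real q ^ m) = B * real p ^ m"
  proof -
    have "T * (d ^ m - 1) * real q ^ m = B * d ^ m * real q ^ m" using T1 by simp
    then show ?thesis using dq by (simp add: algebra_simps)
  qed
  define Y1 where "Y1 = (\<Sum>k<n. gamma (u k) (u (Suc k)) * int q ^ k * int p ^ (n - k))"
  define Y2 where "Y2 = (\<Sum>j<m. gamma (u (j + n)) (u (Suc (j + n))) * int q ^ (j + n) * int p ^ (m - j))"
  have PY: "P * real p ^ n = real_of_int Y1"
  proof -
    have "P * real p ^ n = (\<Sum>k<n. g k * (real p ^ n / d ^ k))"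
      unfolding P_def f_def by (simp add: sum_distrib_right)
    also have "\<dots> = real_of_int Y1"
      unfolding Y1_def d_def g_def of_int_sum
      by (rule sum.cong) (use pow_div[OF q0 p0] in auto)
    finally show ?thesis .
  qed
  have BY: "B * real p ^ (n + m) = real_of_int Y2"
  proof -
    have "B * real p ^ (n + m) = (\<Sum>j<m. g (j + n) * (real p ^ (n + m) / d ^ (j + n)))"
      unfolding B_def f_def by (simp add: sum_distrib_right)
    also have "\<dots> = real_of_int Y2"
      unfolding Y2_def d_def g_def of_int_sum
      by (rule sum.cong) (use pow_div[OF q0 p0] in auto)
    finally show ?thesis .
  qed
  define Y where "Y = Y1 * (int p ^ m - int q ^ m) + Y2"
  have Dpos: "real p ^ n * (real p ^ m - real q ^ m) > 0"
    using p0 qp m0 by (simp add: power_strict_mono)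
  have "lasso_cost gamma d pre cyc * (real p ^ n * (real p ^ m - real q ^ m)) = real_of_int Y"
  proof -
    have "lasso_cost gamma d pre cyc * (real p ^ n * (real p ^ m - real q ^ m))
        = P * real p ^ n * (real p ^ m - real q ^ m) + T * (real p ^ m - real q ^ m) * real p ^ n"
      using cost by (simp add: algebra_simps)
    also have "\<dots> = real_of_int Y"
      unfolding T2 Y_def using PY BY by (simp add: power_add algebra_simps)
    finally show ?thesis .
  qed
  then have "lasso_cost gamma d pre cyc = real_of_int Y / (real p ^ n * (real p ^ m - real q ^ m))"
    using Dpos by (metis less_irrefl nonzero_mult_div_cancel_right)
  then show ?thesis unfolding d_def n_def m_def by blast
qed

lemma diff_pow_mono:
  fixes p q :: nat
  assumes qp: "q < p" and mN: "m \<le> N"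
  shows "int p ^ m - int q ^ m \<le> int p ^ N - int q ^ N"
  using mN
proof (induction N rule: dec_induct)
  case base
  then show ?case by simp
next
  case (step k)
  have a: "int q ^ k \<le> int p ^ k" using qp by (simp add: power_mono)
  have b: "int q - 1 \<le> int p - 1" using qp by simp
  have c: "0 \<le> int q ^ k" by simp
  have d: "0 \<le> int q - 1 \<or> q = 0" by auto
  have "int q ^ k * (int q - 1) \<le> int p ^ k * (int p - 1)"
  proof (cases "q = 0")
    case True
    then show ?thesis using qp by (cases k) auto
  next
    case False
    then show ?thesis using a b c by (intro mult_mono) auto
  qed
  then show ?case using step.IH by (simp add: algebra_simps)
qed

lemma simple_len:
  assumes "finite V" "simple_lasso V E vinit pre cyc"
  shows "length pre + length cyc \<le> card V"
proof -
  have "length (pre @ cyc) = card (set (pre @ cyc))"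
    using assms(2) distinct_card[of "pre @ cyc"] unfolding simple_lasso_def by simp
  also have "\<dots> \<le> card V"
    using assms unfolding simple_lasso_def lasso_def by (intro card_mono) auto
  finally show ?thesis by simp
qed

theorem corollary2:
  fixes V V0 V1 :: "'v set" and vinit :: 'v and E :: "('v \<times> 'v) set"
    and gamma :: "'v \<Rightarrow> 'v \<Rightarrow> int" and p q :: nat
  assumes "quant_game V V0 V1 vinit E"
    and "p > 0" and "q > 0" and "real p / real q > 1"
    and "\<exists>pre1 cyc1 pre2 cyc2. simple_lasso V E vinit pre1 cyc1 \<and> simple_lasso V E vinit pre2 cyc2 \<and>
           lasso_cost gamma (real p / real q) pre1 cyc1 \<noteq> lasso_cost gamma (real p / real q) pre2 cyc2"
  shows "\<exists>a b :: int. 0 < b \<and>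
           b \<le> (int p ^ card V - int q ^ card V)\<^sup>2 * int p ^ (2 * card V) \<and>
           Min {\<bar>lasso_cost gamma (real p / real q) pre1 cyc1 - lasso_cost gamma (real p / real q) pre2 cyc2\<bar> |
                  pre1 cyc1 pre2 cyc2. simple_lasso V E vinit pre1 cyc1 \<and> simple_lasso V E vinit pre2 cyc2 \<and>
                  lasso_cost gamma (real p / real q) pre1 cyc1 \<noteq> lasso_cost gamma (real p / real q) pre2 cyc2}
           = real_of_int a / real_of_int b"
proof -
  define N where "N = card V"
  define c where "c pre cyc = lasso_cost gamma (real p / real q) pre cyc" for pre cyc
  define S where "S = {\<bar>lasso_cost gamma (real p / real q) pre1 cyc1 - lasso_cost gamma (real p / real q) pre2 cyc2\<bar> |
                  pre1 cyc1 pre2 cyc2. simple_lasso V E vinit pre1 cyc1 \<and> simple_lasso V E vinit pre2 cyc2 \<and>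
                  lasso_cost gamma (real p / real q) pre1 cyc1 \<noteq> lasso_cost gamma (real p / real q) pre2 cyc2}"
  have finV: "finite V" using assms(1) unfolding quant_game_def by simp
  have qp: "q < p" using assms(3,4) by (simp add: field_simps)
  define L where "L = {(pre, cyc). simple_lasso V E vinit pre cyc}"
  define W where "W = {xs. set xs \<subseteq> V \<and> length xs \<le> N}"
  have "L \<subseteq> W \<times> W"
  proof
    fix x assume "x \<in> L"
    then obtain pre cyc where x: "x = (pre, cyc)" and sl: "simple_lasso V E vinit pre cyc"
      unfolding L_def by auto
    have "length pre + length cyc \<le> N" using simple_len[OF finV sl] N_def by simp
    moreover have "set pre \<subseteq> V" "set cyc \<subseteq> V" using sl unfolding simple_lasso_def lasso_def by auto
    ultimately show "x \<in> W \<times> W" unfolding W_def x by auto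
  qed
  moreover have "finite W" unfolding W_def using finV by (rule finite_lists_length_le)
  ultimately have finL: "finite L" by (meson finite_SigmaI finite_subset)
  have "S \<subseteq> (\<lambda>((a,b),(e,h)). \<bar>c a b - c e h\<bar>) ` (L \<times> L)"
    unfolding S_def L_def c_def by force
  then have finS: "finite S" using finL by (meson finite_SigmaI finite_imageI finite_subset)
  have neS: "S \<noteq> {}" using assms(5) unfolding S_def by blast
  have "Min S \<in> S" using finS neS by (rule Min_in)
  then obtain pre1 cyc1 pre2 cyc2 where
    sl1: "simple_lasso V E vinit pre1 cyc1" and sl2: "simple_lasso V E vinit pre2 cyc2"
    and MS: "Min S = \<bar>c pre1 cyc1 - c pre2 cyc2\<bar>"
    unfolding S_def c_def by blast
  have ne1: "cyc1 \<noteq> []" using sl1 unfolding simple_lasso_def lasso_def by simp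
  have ne2: "cyc2 \<noteq> []" using sl2 unfolding simple_lasso_def lasso_def by simp
  obtain Y1 where Y1: "c pre1 cyc1 = real_of_int Y1 / (real p ^ length pre1 * (real p ^ length cyc1 - real q ^ length cyc1))"
    using cost_form[OF assms(3) qp ne1] unfolding c_def by blast
  obtain Y2 where Y2: "c pre2 cyc2 = real_of_int Y2 / (real p ^ length pre2 * (real p ^ length cyc2 - real q ^ length cyc2))"
    using cost_form[OF assms(3) qp ne2] unfolding c_def by blast
  define D1 where "D1 = int p ^ length pre1 * (int p ^ length cyc1 - int q ^ length cyc1)"
  define D2 where "D2 = int p ^ length pre2 * (int p ^ length cyc2 - int q ^ length cyc2)"
  have rD1: "real_of_int D1 = real p ^ length pre1 * (real p ^ length cyc1 - real q ^ length cyc1)"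
    unfolding D1_def by simp
  have rD2: "real_of_int D2 = real p ^ length pre2 * (real p ^ length cyc2 - real q ^ length cyc2)"
    unfolding D2_def by simp
  have bnd: "0 < D \<and> D \<le> int p ^ N * (int p ^ N - int q ^ N)"
    if D: "D = int p ^ length pre * (int p ^ length cyc - int q ^ length cyc)"
      and sl: "simple_lasso V E vinit pre cyc" for D pre cyc
  proof -
    have ne: "cyc \<noteq> []" using sl unfolding simple_lasso_def lasso_def by simp
    have len: "length pre + length cyc \<le> N" using simple_len[OF finV sl] N_def by simp
    have g0: "0 < int p ^ length cyc - int q ^ length cyc"
      using qp ne by (simp add: power_strict_mono)
    have "int p ^ length cyc - int q ^ length cyc \<le> int p ^ N - int q ^ N"
      using diff_pow_mono[OF qp] len by simp
    moreover have "int p ^ length pre \<le> int p ^ N"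
      using len assms(2) by (intro power_increasing) auto
    ultimately show ?thesis unfolding D using g0 assms(2)
      by (auto intro: mult_mono)
  qed
  have b1: "0 < D1" "D1 \<le> int p ^ N * (int p ^ N - int q ^ N)" using bnd[OF D1_def sl1] by auto
  have b2: "0 < D2" "D2 \<le> int p ^ N * (int p ^ N - int q ^ N)" using bnd[OF D2_def sl2] by auto
  define a where "a = \<bar>Y1 * D2 - Y2 * D1\<bar>"
  define b where "b = D1 * D2"
  have "0 < b" unfolding b_def using b1 b2 by simp
  moreover have "b \<le> (int p ^ N - int q ^ N)\<^sup>2 * int p ^ (2 * N)"
  proof -
    have "b \<le> (int p ^ N * (int p ^ N - int q ^ N)) * (int p ^ N * (int p ^ N - int q ^ N))"
      unfolding b_def using b1 b2 by (intro mult_mono) auto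
    also have "\<dots> = (int p ^ N - int q ^ N)\<^sup>2 * int p ^ (2 * N)"
      by (simp add: power2_eq_square power_mult algebra_simps)
    finally show ?thesis .
  qed
  moreover have "Min S = real_of_int a / real_of_int b"
  proof -
    have r1: "real_of_int D1 > 0" "real_of_int D2 > 0" using b1 b2 by auto
    have "c pre1 cyc1 - c pre2 cyc2 = real_of_int (Y1 * D2 - Y2 * D1) / real_of_int b"
      unfolding Y1 Y2 rD1[symmetric] rD2[symmetric] b_def using r1
      by (simp add: field_simps)
    then show ?thesis unfolding MS a_def using \<open>0 < b\<close> by (simp add: abs_divide)
  qed
  ultimately show ?thesis unfolding S_def N_def by blast
qed

end
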